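(* Let $\mathcal{D}\subseteq\{0,1\}^m$ be nonempty and $c,d\in\mathbb{R}^m$ with $d^\top x>0$ for all $x\in\mathcal{D}$, and let $f(\delta):=\min_{x\in\mathcal{D}}(c-\delta d)^\top x$. Then the look-ahead Newton–Dinkelbach method (described in the context), applied to $f$ with any initial point $\delta^{(1)}$ and supergradient $g^{(1)}\in\partial f(\delta^{(1)})$ satisfying $f(\delta^{(1)})\le 0$ and $g^{(1)}<0$, terminates in $O(m\log m)$ iterations.
   Context: This is the linear fractional combinatorial optimization problem $\min\{c^\top x/d^\top x: x\in\mathcal{D}\}$, whose optimal value is the unique root of $f$. Value and supergradient oracles for $f$ are implemented by a linear optimization oracle over $\mathcal{D}$: for $\delta\in\mathbb{R}$ it returns some $x\in\operatorname{argmin}_{x\in\mathcal{D}}(c-\delta d)^\top x$, giving $f(\delta)=(c-\delta d)^\top x$ and the supergradient $-d^\top x\in\partial f(\delta)$. Here $\partial f(x_0):=\{g: f(x)\le f(x_0)+g(x-x_0)\ \forall x\}$. Look-ahead Newton–Dinkelbach method: input $\delta^{(1)}$, $g^{(1)}\in\partial f(\delta^{(1)})$ with $f(\delta^{(1)})\le0$, $g^{(1)}<0$. For $i=1,2,\dots$: if $f(\delta^{(i)})=0$, return $\delta^{(i)}$. Otherwise set $\delta:=\delta^{(i)}-f(\delta^{(i)})/g^{(i)}$ and query $g\in\partial f(\delta)$; if $f(\delta)=-\infty$, or $f(\delta)<0$ and $g\ge0$, return NO ROOT. Then set $\delta':=2\delta-\delta^{(i)}$ and query $g'\in\partial f(\delta')$;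 if $-\infty<f(\delta')<0$ and $g'<0$, replace $(\delta,g)$ by $(\delta',g')$. Set $\delta^{(i+1)}:=\delta$, $g^{(i+1)}:=g$. *)

theory Defs
  imports Complex_Main
begin

text \<open>Vectors in R^m are modelled as functions nat => real; only the
  coordinates i < m matter.  Points of {0,1}^m are 0/1 on indices < m and 0 elsewhere.\<close>

definition bin_cube :: "nat \<Rightarrow> (nat \<Rightarrow> real) set" where
  "bin_cube m = {x. (\<forall>i<m. x i = 0 \<or> x i = 1) \<and> (\<forall>i\<ge>m. x i = 0)}"

definition dotp :: "nat \<Rightarrow> (nat \<Rightarrow> real) \<Rightarrow> (nat \<Rightarrow> real) \<Rightarrow> real" where
  "dotp m a x = (\<Sum>i<m. a i * x i)"

definition fval :: "nat \<Rightarrow> (nat \<Rightarrow> real) \<Rightarrow> (nat \<Rightarrow> real) \<Rightarrow> (nat \<Rightarrow> real) set \<Rightarrow> real \<Rightarrow> real" where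
  "fval m c d D \<delta> = Min ((\<lambda>x. dotp m (\<lambda>i. c i - \<delta> * d i) x) ` D)"

definition supergrad :: "(real \<Rightarrow> real) \<Rightarrow> real \<Rightarrow> real \<Rightarrow> bool" where
  "supergrad f x0 g \<longleftrightarrow> (\<forall>x. f x \<le> f x0 + g * (x - x0))"

definition lin_argmin :: "nat \<Rightarrow> (nat \<Rightarrow> real) \<Rightarrow> (nat \<Rightarrow> real) \<Rightarrow> (nat \<Rightarrow> real) set \<Rightarrow> real \<Rightarrow> (nat \<Rightarrow> real) set" where
  "lin_argmin m c d D \<delta> = {x \<in> D. \<forall>y\<in>D. dotp m (\<lambda>i. c i - \<delta> * d i) x \<le> dotp m (\<lambda>i. c i - \<delta> * d i) y}"

text \<open>One iteration of the look-ahead Newton--Dinkelbach method, started from a state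
  (delta_i, g_i) with f(delta_i) \<noteq> 0.  The result is Some (delta_{i+1}, g_{i+1}) or
  None (= the method returns NO ROOT).  Supergradients are queried through the oracle:
  g = - d^T x for an oracle output x.  (f never takes the value -infinity here,
  since D is finite and nonempty.)\<close>
definition lanD_step ::
  "nat \<Rightarrow> (nat \<Rightarrow> real) \<Rightarrow> (nat \<Rightarrow> real) \<Rightarrow> (nat \<Rightarrow> real) set \<Rightarrow> real \<times> real \<Rightarrow> (real \<times> real) option \<Rightarrow> bool" where
  "lanD_step m c d D s r \<longleftrightarrow>
     (let f = fval m c d D; \<delta>i = fst s; gi = snd s; \<delta> = \<delta>i - f \<delta>i / gi in
      \<exists>x \<in> lin_argmin m c d D \<delta>.
        let g = - dotp m d x in
        if f \<delta> < 0 \<and> g \<ge> 0 then r = None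
        else (let \<delta>' = 2 * \<delta> - \<delta>i in
              \<exists>x' \<in> lin_argmin m c d D \<delta>'.
                let g' = - dotp m d x' in
                r = Some (if f \<delta>' < 0 \<and> g' < 0 then (\<delta>', g') else (\<delta>, g))))"

text \<open>A run: states k = state at iteration k+1 (states 0 = (delta^(1), g^(1))).
  Whenever the state at iteration k+1 is present and not a root, the next state arises by one step.\<close>
definition lanD_run ::
  "nat \<Rightarrow> (nat \<Rightarrow> real) \<Rightarrow> (nat \<Rightarrow> real) \<Rightarrow> (nat \<Rightarrow> real) set \<Rightarrow> real \<Rightarrow> real \<Rightarrow> (nat \<Rightarrow> (real \<times> real) option) \<Rightarrow> bool" where
  "lanD_run m c d D \<delta>1 g1 st \<longleftrightarrow>
     st 0 = Some (\<delta>1, g1) \<and>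
     (\<forall>k s. st k = Some s \<and> fval m c d D (fst s) \<noteq> 0 \<longrightarrow> lanD_step m c d D s (st (Suc k)))"

end

theory Submission
  imports Defs "HOL-Library.FuncSet"
begin


lemma halving_sum:
  fixes a :: "nat \<Rightarrow> real"
  shows "finite J \<Longrightarrow> J \<noteq> {} \<Longrightarrow> (\<forall>p\<in>J. a p > 0) \<Longrightarrow>
    (\<forall>p\<in>J. \<forall>q\<in>J. p < q \<longrightarrow> a q \<le> a p / 2) \<Longrightarrow> sum a J < 2 * a (Min J)"
proof (induction "card J" arbitrary: J rule: less_induct)
  case less
  define J' where "J' = J - {Min J}"
  have mJ: "Min J \<in> J" using less.prems Min_in by blast
  have sJ: "sum a J = a (Min J) + sum a J'"
    unfolding J'_def using less.prems mJ by (simp add: sum.remove)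
  show ?case
  proof (cases "J' = {}")
    case True
    then show ?thesis using sJ less.prems mJ by auto
  next
    case False
    have cJ: "card J' < card J" unfolding J'_def using less.prems mJ
      by (simp add: card_gt_0_iff)
    have fJ': "finite J'" using less.prems J'_def by auto
    have "sum a J' < 2 * a (Min J')"
      using less.hyps[OF cJ fJ' False] less.prems unfolding J'_def by auto
    moreover have "Min J' \<in> J'" using fJ' False Min_in by blast
    moreover have "Min J < Min J'"
      using \<open>Min J' \<in> J'\<close> less.prems unfolding J'_def
      by (metis DiffE Min_le insertI1 order_le_neq_trans)
    moreover have "a (Min J') \<le> a (Min J) / 2"
      using less.prems mJ \<open>Min J' \<in> J'\<close> \<open>Min J < Min J'\<close> unfolding J'_def by blast
    ultimately have "sum a J' < a (Min J)" by linarith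
    then show ?thesis using sJ by linarith
  qed
qed

lemma halving_tail:
  fixes a :: "nat \<Rightarrow> real"
  assumes "finite I" "\<forall>p\<in>I. a p > 0" "\<forall>p\<in>I. \<forall>q\<in>I. p < q \<longrightarrow> a q \<le> a p / 2" "j \<in> I"
  shows "sum a {q\<in>I. q > j} < a j"
proof (cases "{q\<in>I. q > j} = {}")
  case True then show ?thesis using assms by (simp only: True) simp
next
  case False
  let ?J = "{q\<in>I. q > j}"
  have fJ: "finite ?J" using assms(1) by simp
  have "sum a ?J < 2 * a (Min ?J)"
    apply (rule halving_sum[OF fJ False])
    using assms(2,3) by simp_all
  moreover have "Min ?J \<in> ?J" using False fJ Min_in by blast
  moreover have "a (Min ?J) \<le> a j / 2" using calculation(2) assms(3,4) by simp
  ultimately show ?thesis by linarith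
qed

lemma no_equal_subsums:
  fixes a :: "nat \<Rightarrow> real"
  assumes "finite I" "\<forall>p\<in>I. a p > 0" "\<forall>p\<in>I. \<forall>q\<in>I. p < q \<longrightarrow> a q \<le> a p / 2"
    and "S \<subseteq> I" "T \<subseteq> I" "j \<in> S - T" "\<forall>q \<in> T - S. q > j"
  shows "sum a S \<noteq> sum a T"
proof
  assume eq: "sum a S = sum a T"
  have fS: "finite S" "finite T" using assms finite_subset by auto
  have "sum a S = sum a (S \<inter> T) + sum a (S - T)"
    by (rule sum.Int_Diff[OF fS(1)])
  moreover have "sum a T = sum a (S \<inter> T) + sum a (T - S)"
    using fS by (metis sum.Int_Diff Int_commute)
  ultimately have e2: "sum a (S - T) = sum a (T - S)" using eq by linarith
  have "a j \<le> sum a (S - T)"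
    by (rule member_le_sum) (use assms fS in \<open>auto intro: less_imp_le\<close>)
  moreover have "sum a (T - S) \<le> sum a {q\<in>I. q > j}"
    by (rule sum_mono2) (use assms in auto)
  moreover have "sum a {q\<in>I. q > j} < a j"
    by (rule halving_tail) (use assms in auto)
  ultimately show False using e2 by linarith
qed

lemma sum_dotp_card:
  assumes "\<forall>p\<in>S. y p \<in> bin_cube m" "finite S"
  shows "(\<Sum>p\<in>S. dotp m w (y p)) = (\<Sum>i<m. w i * real (card {p\<in>S. y p i = 1}))"
proof -
  have "(\<Sum>p\<in>S. dotp m w (y p)) = (\<Sum>p\<in>S. \<Sum>i<m. w i * y p i)"
    by (simp add: dotp_def)
  also have "\<dots> = (\<Sum>i<m. \<Sum>p\<in>S. w i * y p i)" by (rule sum.swap)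
  also have "\<dots> = (\<Sum>i<m. w i * real (card {p\<in>S. y p i = 1}))"
  proof (rule sum.cong)
    fix i assume i: "i \<in> {..<m}"
    have "(\<Sum>p\<in>S. w i * y p i) = (\<Sum>p\<in>S. if y p i = 1 then w i else 0)"
    proof (rule sum.cong)
      fix p assume "p \<in> S"
      then have "y p i = 0 \<or> y p i = 1" using assms i unfolding bin_cube_def by auto
      then show "w i * y p i = (if y p i = 1 then w i else 0)" by auto
    qed simp
    also have "\<dots> = (\<Sum>p\<in>{p\<in>S. y p i = 1}. w i)"
      using assms(2) by (simp add: sum.inter_filter[symmetric])
    also have "\<dots> = w i * real (card {p\<in>S. y p i = 1})" by simp
    finally show "(\<Sum>p\<in>S. w i * y p i) = w i * real (card {p\<in>S. y p i = 1})" .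
  qed simp
  finally show ?thesis .
qed

lemma goemans_count:
  fixes I :: "nat set"
  assumes fI: "finite I" and yI: "\<forall>p\<in>I. y p \<in> bin_cube m"
    and pos: "\<forall>p\<in>I. dotp m w (y p) > 0"
    and half: "\<forall>p\<in>I. \<forall>q\<in>I. p < q \<longrightarrow> dotp m w (y q) \<le> dotp m w (y p) / 2"
  shows "2 ^ card I \<le> (card I + 1) ^ m"
proof -
  define a where "a p = dotp m w (y p)" for p
  define \<phi> where "\<phi> S = (\<lambda>i\<in>{..<m}. card {p\<in>S. y p i = 1})" for S
  have apos: "\<forall>p\<in>I. a p > 0" using pos a_def by simp
  have ahalf: "\<forall>p\<in>I. \<forall>q\<in>I. p < q \<longrightarrow> a q \<le> a p / 2" using half a_def by simp
  have sumid: "sum a S = (\<Sum>i<m. w i * real (card {p\<in>S. y p i = 1}))" if "S \<subseteq> I" for S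
    unfolding a_def by (rule sum_dotp_card) (use that yI fI finite_subset in auto)
  have inj: "inj_on \<phi> (Pow I)"
  proof (rule inj_onI, rule ccontr)
    fix S T assume S: "S \<in> Pow I" and T: "T \<in> Pow I" and eq: "\<phi> S = \<phi> T" and ne: "S \<noteq> T"
    have ceq: "card {p\<in>S. y p i = 1} = card {p\<in>T. y p i = 1}" if "i < m" for i
      using fun_cong[OF eq, of i] that unfolding \<phi>_def by simp
    have seq: "sum a S = sum a T"
      using sumid[of S] sumid[of T] S T ceq by simp
    define U where "U = (S - T) \<union> (T - S)"
    have fU: "finite U" using S T fI U_def by (meson Diff_subset PowD finite_Un finite_subset)
    have neU: "U \<noteq> {}" using ne U_def by auto
    define j where "j = Min U"
    have jU: "j \<in> U" using fU neU j_def Min_in by blast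
    have jmin: "\<forall>q\<in>U. j \<le> q" using fU j_def by simp
    show False
    proof (cases "j \<in> S - T")
      case True
      have "\<forall>q \<in> T - S. q > j"
      proof
        fix q assume q: "q \<in> T - S"
        then have "j \<le> q" using jmin U_def by blast
        moreover have "q \<noteq> j" using q True by blast
        ultimately show "q > j" by simp
      qed
      then have "sum a S \<noteq> sum a T"
        by (intro no_equal_subsums[OF fI apos ahalf, of S T j]) (use S T True in simp_all)
      then show False using seq by simp
    next
      case False
      then have jT: "j \<in> T - S" using jU U_def by auto
      have "\<forall>q \<in> S - T. q > j"
      proof
        fix q assume q: "q \<in> S - T"
        then have "j \<le> q" using jmin U_def by blast
        moreover have "q \<noteq> j" using q jT by blast
        ultimately show "q > j" by simp
      qed
      then have "sum a T \<noteq> sum a S"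
        by (intro no_equal_subsums[OF fI apos ahalf, of T S j]) (use S T jT in simp_all)
      then show False using seq by simp
    qed
  qed
  have sub: "\<phi> ` Pow I \<subseteq> PiE {..<m} (\<lambda>_. {0..card I})"
  proof
    fix v assume "v \<in> \<phi> ` Pow I"
    then obtain S where S: "S \<subseteq> I" and v: "v = \<phi> S" by auto
    have "card {p\<in>S. y p i = 1} \<le> card I" for i
      by (rule card_mono[OF fI]) (use S in auto)
    then show "v \<in> PiE {..<m} (\<lambda>_. {0..card I})" using v unfolding \<phi>_def by auto
  qed
  have "card (Pow I) \<le> card (PiE {..<m} (\<lambda>_. {0..card I}))"
    by (rule card_inj_on_le[OF inj sub]) (simp add: finite_PiE)
  also have "\<dots> = (card I + 1) ^ m" by (simp add: card_PiE)
  finally show ?thesis using card_Pow[OF fI] by simp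
qed



lemma ln2_bounds: "1/2 \<le> ln (2::real)" "ln (2::real) \<le> 1"
proof -
  have "ln (1/2::real) \<le> 1/2 - 1" by (rule ln_le_minus_one) simp
  then show "1/2 \<le> ln (2::real)" by (simp add: ln_div)
  have "ln (2::real) \<le> 2 - 1" by (rule ln_le_minus_one) simp
  then show "ln (2::real) \<le> 1" by simp
qed

lemma m_le_mlnm: assumes "(m::nat) \<ge> 1" shows "real m \<le> 2 * (real m * ln (real m) + 1)"
proof (cases "m = 1")
  case False
  from assms have "m \<ge> 2" using False by simp
  then have "ln (real m) \<ge> ln 2" by simp
  then have "ln (real m) \<ge> 1/2" using ln2_bounds by linarith
  then have "real m * ln (real m) \<ge> real m / 2" using \<open>m \<ge> 2\<close>
    by (metis divide_inverse less_eq_real_def mult.commute mult_le_cancel_left_pos of_nat_0_less_iff zero_less_numeral inverse_eq_divide order_trans_rules(22) One_nat_def le_numeral_extra(4) mult_1)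
  then have "real m \<le> 2 * (real m * ln (real m))" by linarith
  then show ?thesis by (simp add: ring_distribs)
qed simp

lemma count_bound:
  assumes "(2::nat) ^ n \<le> (n + 1) ^ m" "m \<ge> 1"
  shows "real n \<le> 13 * (real m * ln (real m) + 1)"
proof -
  have "real ((2::nat) ^ n) \<le> real ((n + 1) ^ m)" using assms(1) by linarith
  then have "(2::real) ^ n \<le> (real n + 1) ^ m" by (simp add: add.commute)
  then have "ln ((2::real) ^ n) \<le> ln ((real n + 1) ^ m)" by simp
  then have A: "real n * ln 2 \<le> real m * ln (real n + 1)" by (simp add: ln_realpow)
  have mpos: "real m > 0" using assms by simp
  have "ln (real n + 1) = ln (4 * real m) + ln ((real n + 1) / (4 * real m))"
    using mpos by (simp add: ln_div)
  also have "ln (4 * real m) = 2 * ln 2 + ln (real m)"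
  proof -
    have "ln (4::real) = 2 * ln 2" using ln_mult[of 2 2] by simp
    then show ?thesis using mpos by (simp add: ln_mult)
  qed
  also have "ln ((real n + 1) / (4 * real m)) \<le> (real n + 1) / (4 * real m) - 1"
    by (rule ln_le_minus_one) (use mpos in simp)
  finally have "ln (real n + 1) \<le> 2 + ln (real m) + (real n + 1) / (4 * real m) - 1"
    using ln2_bounds by linarith
  then have "real m * ln (real n + 1) \<le> real m * (1 + ln (real m) + (real n + 1) / (4 * real m))"
    using mpos by (intro mult_left_mono) auto
  also have "\<dots> = real m + real m * ln (real m) + (real n + 1) / 4"
    using mpos by (simp add: field_simps)
  finally have B: "real m * ln (real n + 1) \<le> real m + real m * ln (real m) + (real n + 1) / 4" .
  have C: "real n / 2 \<le> real n * ln (2::real)" using mult_left_mono[OF ln2_bounds(1), of "real n"] by simp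
  define X where "X = real m * ln (real m)"
  have B': "real m * ln (real n + 1) \<le> real m + X + (real n + 1) / 4" using B X_def by simp
  have X0: "X \<ge> 0" using assms X_def by simp
  have M: "real m \<le> 2 * (X + 1)" using m_le_mlnm[OF assms(2)] X_def by simp
  define P where "P = real n * ln (2::real)"
  define Q where "Q = real m * ln (real n + 1)"
  have A': "P \<le> Q" using A P_def Q_def by simp
  have B'': "Q \<le> real m + X + (real n + 1) / 4" using B' Q_def by simp
  have C': "real n / 2 \<le> P" using C P_def by simp
  have "real n \<le> 13 * (X + 1)" using A' B'' C' X0 M by argo
  then show ?thesis using X_def by simp
qed


lemma fin_bin_cube: "finite (bin_cube m)"
proof -
  have "bin_cube m \<subseteq> (\<lambda>S i. if i \<in> S then 1 else 0) ` Pow {..<m}"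
  proof
    fix x assume x: "x \<in> bin_cube m"
    have "x = (\<lambda>i. if i \<in> {i. i < m \<and> x i = 1} then 1 else 0)"
    proof
      fix i show "x i = (if i \<in> {i. i < m \<and> x i = 1} then 1 else 0)"
        using x unfolding bin_cube_def by (cases "i < m") auto
    qed
    then show "x \<in> (\<lambda>S i. if i \<in> S then 1 else 0) ` Pow {..<m}" by blast
  qed
  then show ?thesis by (rule finite_subset) simp
qed

lemma dotp_lin: "dotp m (\<lambda>i. c i - \<delta> * d i) x = dotp m c x - \<delta> * dotp m d x"
  unfolding dotp_def by (simp add: sum_subtractf sum_distrib_left algebra_simps)

locale lfco =
  fixes m :: nat and c d :: "nat \<Rightarrow> real" and D :: "(nat \<Rightarrow> real) set"
  assumes Dsub: "D \<subseteq> bin_cube m" and Dne: "D \<noteq> {}" and dpos: "\<forall>x\<in>D. dotp m d x > 0"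
begin

abbreviation "F \<equiv> fval m c d D"
abbreviation "AM \<equiv> lin_argmin m c d D"

lemma finD: "finite D" using Dsub fin_bin_cube finite_subset by blast

lemma F_le: "x \<in> D \<Longrightarrow> F \<delta> \<le> dotp m c x - \<delta> * dotp m d x"
  unfolding fval_def dotp_lin[symmetric] using finD by (intro Min_le) auto

lemma F_att: "\<exists>x\<in>D. F \<delta> = dotp m c x - \<delta> * dotp m d x"
proof -
  have "F \<delta> \<in> (\<lambda>x. dotp m (\<lambda>i. c i - \<delta> * d i) x) ` D"
    unfolding fval_def using finD Dne by (intro Min_in) auto
  then show ?thesis by (auto simp: dotp_lin)
qed

lemma AM_F: "x \<in> AM \<delta> \<Longrightarrow> x \<in> D \<and> F \<delta> = dotp m c x - \<delta> * dotp m d x"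
proof -
  assume x: "x \<in> AM \<delta>"
  then have xD: "x \<in> D" and opt: "\<forall>y\<in>D. dotp m c x - \<delta> * dotp m d x \<le> dotp m c y - \<delta> * dotp m d y"
    unfolding lin_argmin_def by (auto simp: dotp_lin)
  obtain y where "y \<in> D" "F \<delta> = dotp m c y - \<delta> * dotp m d y" using F_att by blast
  then show ?thesis using xD opt F_le[OF xD, of \<delta>] by force
qed

lemma AM_ne: "\<exists>x. x \<in> AM \<delta>"
proof -
  obtain x where x: "x \<in> D" "F \<delta> = dotp m c x - \<delta> * dotp m d x" using F_att by blast
  have "\<forall>y\<in>D. dotp m c x - \<delta> * dotp m d x \<le> dotp m c y - \<delta> * dotp m d y"
    using x F_le by metis
  then have "x \<in> AM \<delta>" unfolding lin_argmin_def using x(1) by (auto simp: dotp_lin)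
  then show ?thesis by blast
qed

lemma supergrad_AM: "x \<in> AM \<delta> \<Longrightarrow> supergrad F \<delta> (- dotp m d x)"
  unfolding supergrad_def
proof
  fix y assume x: "x \<in> AM \<delta>"
  have "F y \<le> dotp m c x - y * dotp m d x" using F_le AM_F[OF x] by blast
  then show "F y \<le> F \<delta> + - dotp m d x * (y - \<delta>)" using AM_F[OF x] by (simp add: algebra_simps)
qed

definition ds where "ds = Min ((\<lambda>x. dotp m c x / dotp m d x) ` D)"

lemma F_ds: "F ds = 0"
proof -
  have ge: "dotp m c x - ds * dotp m d x \<ge> 0" if x: "x \<in> D" for x
  proof -
    have "ds \<le> dotp m c x / dotp m d x" unfolding ds_def using finD x by (intro Min_le) auto
    then show ?thesis using dpos x by (simp add: field_simps)
  qed
  have "ds \<in> (\<lambda>x. dotp m c x / dotp m d x) ` D" unfolding ds_def using finD Dne by (intro Min_in) auto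
  then obtain x0 where x0: "x0 \<in> D" "ds = dotp m c x0 / dotp m d x0" by blast
  have "dotp m d x0 > 0" using dpos x0(1) by blast
  then have "dotp m c x0 - ds * dotp m d x0 = 0" using x0(2) by simp
  then have "F ds \<le> 0" using F_le[OF x0(1), of ds] by simp
  moreover obtain y where "y \<in> D" "F ds = dotp m c y - ds * dotp m d y" using F_att by blast
  ultimately show ?thesis using ge by force
qed

lemma F_mono: "\<delta> < \<delta>' \<Longrightarrow> F \<delta>' < F \<delta>"
proof -
  assume lt: "\<delta> < \<delta>'"
  obtain x where x: "x \<in> D" "F \<delta> = dotp m c x - \<delta> * dotp m d x" using F_att by blast
  have "\<delta> * dotp m d x < \<delta>' * dotp m d x" using lt dpos x(1) by simp
  then show ?thesis using F_le[OF x(1), of \<delta>'] x(2) by linarith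
qed

lemma F_neg: "F \<delta> < 0 \<longleftrightarrow> ds < \<delta>"
proof (cases "\<delta> < ds")
  case True then show ?thesis using F_mono[of \<delta> ds] F_ds by simp
next
  case False
  then consider "\<delta> = ds" | "ds < \<delta>" by linarith
  then show ?thesis using F_mono[of ds \<delta>] F_ds by cases auto
qed

lemma F_zero: "F \<delta> = 0 \<longleftrightarrow> \<delta> = ds"
  using F_mono[of ds \<delta>] F_mono[of \<delta> ds] F_ds by (cases "\<delta> < ds"; cases "ds < \<delta>") auto

lemma two_points:
  assumes x: "x \<in> AM \<delta>a" and y: "y \<in> AM \<delta>b" and lt: "\<delta>b < \<delta>a"
  shows "dotp m d y \<le> dotp m d x"
    and "ds \<le> \<delta>b \<Longrightarrow> dotp m c y - ds * dotp m d y \<le> dotp m c x - ds * dotp m d x"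
proof -
  have xD: "x \<in> D" and yD: "y \<in> D" using AM_F x y by auto
  have i1: "dotp m c x - \<delta>a * dotp m d x \<le> dotp m c y - \<delta>a * dotp m d y"
    using AM_F[OF x] F_le[OF yD, of \<delta>a] by simp
  have i2: "dotp m c y - \<delta>b * dotp m d y \<le> dotp m c x - \<delta>b * dotp m d x"
    using AM_F[OF y] F_le[OF xD, of \<delta>b] by simp
  have "(\<delta>a - \<delta>b) * (dotp m d y - dotp m d x) \<le> 0"
    using i1 i2 by (simp add: algebra_simps)
  then show dle: "dotp m d y \<le> dotp m d x" using lt
    by (metis diff_gt_0_iff_gt linorder_not_le mult_pos_pos)
  assume "ds \<le> \<delta>b"
  then have "(\<delta>b - ds) * (dotp m d x - dotp m d y) \<ge> 0" using dle by simp
  then show "dotp m c y - ds * dotp m d y \<le> dotp m c x - ds * dotp m d x"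
    using i2 by (simp add: algebra_simps)
qed

lemma step:
  assumes Fi: "F \<delta>i < 0" and gi: "gi < 0" and sg: "supergrad F \<delta>i gi"
    and st: "lanD_step m c d D (\<delta>i, gi) r"
  shows "\<exists>\<delta>n gn x. r = Some (\<delta>n, gn) \<and> x \<in> AM \<delta>n \<and> gn = - dotp m d x \<and> F \<delta>n \<le> 0 \<and>
     \<delta>n \<le> \<delta>i - F \<delta>i / gi \<and>
     ((F \<delta>n < 0 \<and> gi < 2 * gn) \<or> (\<delta>n = \<delta>i - F \<delta>i / gi \<and> 2 * (\<delta>i - F \<delta>i / gi) - \<delta>i \<le> ds))"
proof -
  define \<delta>N where "\<delta>N = \<delta>i - F \<delta>i / gi"
  define \<Delta> where "\<Delta> = F \<delta>i / gi"
  have \<Delta>pos: "\<Delta> > 0" using Fi gi \<Delta>_def by (simp add: divide_neg_neg)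
  have F\<Delta>: "F \<delta>i = gi * \<Delta>" using gi \<Delta>_def by simp
  have FN: "F \<delta>N \<le> 0"
  proof -
    have "F \<delta>N \<le> F \<delta>i + gi * (\<delta>N - \<delta>i)" using sg unfolding supergrad_def by blast
    then show ?thesis unfolding \<delta>N_def using gi by simp
  qed
  have ex: "\<exists>x \<in> AM \<delta>N. (if F \<delta>N < 0 \<and> - dotp m d x \<ge> 0 then r = None
        else (\<exists>x' \<in> AM (2 * \<delta>N - \<delta>i).
                r = Some (if F (2 * \<delta>N - \<delta>i) < 0 \<and> - dotp m d x' < 0
                          then (2 * \<delta>N - \<delta>i, - dotp m d x') else (\<delta>N, - dotp m d x))))"
    using st unfolding lanD_step_def Let_def fst_conv snd_conv \<delta>N_def by blast
  then obtain x where x: "x \<in> AM \<delta>N" and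
    rest: "(if F \<delta>N < 0 \<and> - dotp m d x \<ge> 0 then r = None
        else (\<exists>x' \<in> AM (2 * \<delta>N - \<delta>i).
                r = Some (if F (2 * \<delta>N - \<delta>i) < 0 \<and> - dotp m d x' < 0
                          then (2 * \<delta>N - \<delta>i, - dotp m d x') else (\<delta>N, - dotp m d x))))"
    by blast
  have xpos: "dotp m d x > 0" using AM_F[OF x] dpos by blast
  then obtain x' where x': "x' \<in> AM (2 * \<delta>N - \<delta>i)" and
    r: "r = Some (if F (2 * \<delta>N - \<delta>i) < 0 \<and> - dotp m d x' < 0
                          then (2 * \<delta>N - \<delta>i, - dotp m d x') else (\<delta>N, - dotp m d x))"
    using rest by auto
  have x'pos: "dotp m d x' > 0" using AM_F[OF x'] dpos by blast
  have NdN: "\<delta>N = \<delta>i - \<Delta>" using \<delta>N_def \<Delta>_def by simp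
  show ?thesis
  proof (cases "F (2 * \<delta>N - \<delta>i) < 0")
    case True
    have sg': "F \<delta>i \<le> F (2 * \<delta>N - \<delta>i) + (- dotp m d x') * (\<delta>i - (2 * \<delta>N - \<delta>i))"
      using supergrad_AM[OF x'] unfolding supergrad_def by blast
    then have "gi * \<Delta> < 2 * (- dotp m d x') * \<Delta>" using True F\<Delta> NdN by (simp add: algebra_simps)
    then have "gi * \<Delta> < (2 * (- dotp m d x')) * \<Delta>" by simp
    then have "gi < 2 * (- dotp m d x')" using \<Delta>pos mult_less_cancel_right_pos by blast
    moreover have "2 * \<delta>N - \<delta>i \<le> \<delta>N" using NdN \<Delta>pos by simp
    ultimately show ?thesis using r True x'pos x' \<delta>N_def by (intro exI[of _ "2 * \<delta>N - \<delta>i"] exI[of _ "- dotp m d x'"] exI[of _ x']) auto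
  next
    case False
    then have "2 * \<delta>N - \<delta>i \<le> ds" using F_neg by (meson not_le)
    then show ?thesis using r False x FN \<delta>N_def
      by (intro exI[of _ "\<delta>N"] exI[of _ "- dotp m d x"] exI[of _ x]) auto
  qed
qed

end


context lfco begin

lemma run_step:
  assumes run: "lanD_run m c d D \<delta>1 g1 st" and sp: "st p = Some (\<delta>, g)"
    and Fn: "F \<delta> < 0" and gn: "g < 0" and sg: "supergrad F \<delta> g"
  shows "\<exists>\<delta>n gn x. st (Suc p) = Some (\<delta>n, gn) \<and> x \<in> AM \<delta>n \<and> gn = - dotp m d x \<and> F \<delta>n \<le> 0 \<and>
     \<delta>n \<le> \<delta> - F \<delta> / g \<and>
     ((F \<delta>n < 0 \<and> g < 2 * gn) \<or> (\<delta>n = \<delta> - F \<delta> / g \<and> 2 * (\<delta> - F \<delta> / g) - \<delta> \<le> ds))"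
proof -
  have "lanD_step m c d D (\<delta>, g) (st (Suc p))"
    using run sp Fn unfolding lanD_run_def by fastforce
  then show ?thesis using step[OF Fn gn sg] by blast
qed

lemma run_good:
  assumes run: "lanD_run m c d D \<delta>1 g1 st" and F1: "F \<delta>1 \<le> 0" "supergrad F \<delta>1 g1" "g1 < 0"
    and nr: "\<forall>p\<le>N. \<exists>s. st p = Some s \<and> F (fst s) \<noteq> 0"
  shows "p \<le> N \<Longrightarrow> \<exists>\<delta> g. st p = Some (\<delta>, g) \<and> F \<delta> < 0 \<and> g < 0 \<and> supergrad F \<delta> g \<and>
            (p \<ge> 1 \<longrightarrow> (\<exists>x \<in> AM \<delta>. g = - dotp m d x))"
proof (induction p)
  case 0
  have "st 0 = Some (\<delta>1, g1)" using run unfolding lanD_run_def by simp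
  moreover have "F \<delta>1 \<noteq> 0" using nr calculation by fastforce
  ultimately show ?case using F1 by auto
next
  case (Suc p)
  then obtain \<delta> g where sp: "st p = Some (\<delta>, g)" "F \<delta> < 0" "g < 0" "supergrad F \<delta> g" by auto
  obtain \<delta>n gn x where sn: "st (Suc p) = Some (\<delta>n, gn)" "x \<in> AM \<delta>n" "gn = - dotp m d x" "F \<delta>n \<le> 0"
    using run_step[OF run sp] by blast
  have "F \<delta>n \<noteq> 0" using nr Suc.prems sn(1) by fastforce
  moreover have "gn < 0" using sn AM_F dpos by fastforce
  ultimately show ?case using sn supergrad_AM[OF sn(2)] by auto
qed

lemma run_count:
  assumes run: "lanD_run m c d D \<delta>1 g1 st" and F1: "F \<delta>1 \<le> 0" "supergrad F \<delta>1 g1" "g1 < 0"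
    and nr: "\<forall>p\<le>N. \<exists>s. st p = Some s \<and> F (fst s) \<noteq> 0"
  shows "real N \<le> 26 * (real m * ln (real m) + 1) + 2"
proof -
  define \<delta> where "\<delta> p = fst (the (st p))" for p
  define g where "g p = snd (the (st p))" for p
  note good = run_good[OF run F1 nr]
  have stp: "st p = Some (\<delta> p, g p)" and Fp: "F (\<delta> p) < 0" and gp: "g p < 0"
    and sgp: "supergrad F (\<delta> p) (g p)"
    and rep: "p \<ge> 1 \<Longrightarrow> \<exists>x \<in> AM (\<delta> p). g p = - dotp m d x" if "p \<le> N" for p
    using good[OF that] unfolding \<delta>_def g_def by auto
  define X where "X p = (SOME x. x \<in> AM (\<delta> p) \<and> g p = - dotp m d x)" for p
  have XAM: "X p \<in> AM (\<delta> p)" and Xg: "g p = - dotp m d (X p)" if "1 \<le> p" "p \<le> N" for p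
  proof -
    have "\<exists>x. x \<in> AM (\<delta> p) \<and> g p = - dotp m d x" using rep[OF that(2) that(1)] by blast
    then have "X p \<in> AM (\<delta> p) \<and> g p = - dotp m d (X p)" unfolding X_def by (rule someI_ex)
    then show "X p \<in> AM (\<delta> p)" "g p = - dotp m d (X p)" by auto
  qed
  define b where "b p = dotp m d (X p)" for p
  define h where "h p = dotp m c (X p) - ds * dotp m d (X p)" for p
  define \<delta>N where "\<delta>N p = \<delta> p - F (\<delta> p) / g p" for p
  have XD: "X p \<in> D" if "1 \<le> p" "p \<le> N" for p using AM_F XAM[OF that] by blast
  have bpos: "b p > 0" if "1 \<le> p" "p \<le> N" for p using dpos XD[OF that] unfolding b_def by blast
  have S1: "\<delta> (Suc p) \<le> \<delta>N p \<and> ((F (\<delta> (Suc p)) < 0 \<and> g p < 2 * g (Suc p)) \<or>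
       (\<delta> (Suc p) = \<delta>N p \<and> 2 * \<delta>N p - \<delta> p \<le> ds))" if "Suc p \<le> N" for p
  proof -
    have pN: "p \<le> N" using that by simp
    obtain \<delta>n gn x where sn: "st (Suc p) = Some (\<delta>n, gn)" "\<delta>n \<le> \<delta> p - F (\<delta> p) / g p"
       "((F \<delta>n < 0 \<and> g p < 2 * gn) \<or> (\<delta>n = \<delta> p - F (\<delta> p) / g p \<and> 2 * (\<delta> p - F (\<delta> p) / g p) - \<delta> p \<le> ds))"
      using run_step[OF run stp[OF pN] Fp[OF pN] gp[OF pN] sgp[OF pN]] by blast
    have "\<delta>n = \<delta> (Suc p)" "gn = g (Suc p)" using sn(1) stp[OF that] by auto
    then show ?thesis using sn \<delta>N_def by auto
  qed
  have S2: "ds < \<delta> p" if "p \<le> N" for p using Fp[OF that] F_neg by blast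
  have S3: "\<delta>N p < \<delta> p" if "p \<le> N" for p
  proof -
    have "F (\<delta> p) / g p > 0" using Fp[OF that] gp[OF that] by (simp add: divide_neg_neg)
    then show ?thesis unfolding \<delta>N_def by simp
  qed
  have S4: "\<delta> q < \<delta> p" if "p < q" "q \<le> N" for p q
    using that
  proof (induction q)
    case 0 then show ?case by simp
  next
    case (Suc q)
    have "\<delta> (Suc q) < \<delta> q" using S1[OF Suc.prems(2)] S3[of q] Suc.prems by fastforce
    then show ?case using Suc by (cases "p = q") auto
  qed
  have S5: "b q \<le> b p \<and> h q \<le> h p" if "1 \<le> p" "p \<le> q" "q \<le> N" for p q
  proof (cases "p = q")
    case False
    then have lt: "\<delta> q < \<delta> p" using S4 that by simp
    have q1: "1 \<le> q" using that by simp
    have "p \<le> N" using that by simp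
    note tp = two_points[OF XAM[OF that(1) this] XAM[OF q1 that(3)] lt]
    then show ?thesis using S2[OF that(3)] unfolding b_def h_def by auto
  qed simp
  have S6: "h p = b p * (\<delta>N p - ds)" if "1 \<le> p" "p \<le> N" for p
  proof -
    have Fe: "F (\<delta> p) = dotp m c (X p) - \<delta> p * b p" using AM_F[OF XAM[OF that]] b_def by simp
    have ge: "g p = - b p" using Xg[OF that] b_def by simp
    show ?thesis unfolding h_def \<delta>N_def Fe ge using bpos[OF that] b_def by (simp add: field_simps)
  qed
  have S7: "h p > 0" if "1 \<le> p" "Suc p \<le> N" for p
  proof -
    have "ds < \<delta>N p" using S1[OF that(2)] S2[OF that(2)] by linarith
    then show ?thesis using S6[of p] bpos[of p] that by simp
  qed
  have S8: "b (Suc p) < b p / 2" if "1 \<le> p" "Suc p \<le> N" "g p < 2 * g (Suc p)" for p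
    using that Xg[of p] Xg[of "Suc p"] b_def by simp
  have S9: "h p \<le> h (p - 1) / 2"
    if p2: "2 \<le> p" and pN: "Suc p \<le> N" and A: "\<delta> (Suc p) = \<delta>N p" "2 * \<delta>N p - \<delta> p \<le> ds" for p
  proof -
    define q where "q = p - 1"
    have pq: "p = Suc q" "1 \<le> q" using p2 q_def by auto
    have "\<delta> p \<le> \<delta>N q" using S1[of q] pq pN by simp
    then have e1: "\<delta>N p - ds \<le> (\<delta>N q - ds) / 2" using A by simp
    have e0: "\<delta>N q - ds \<ge> 0" using \<open>\<delta> p \<le> \<delta>N q\<close> S2[of p] pN by simp
    have bb: "b p \<le> b q" "b p \<ge> 0" using S5[of q p] bpos[of p] pq pN by auto
    have "h p = b p * (\<delta>N p - ds)" using S6[of p] pq pN by simp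
    also have "\<dots> \<le> b p * ((\<delta>N q - ds) / 2)" using e1 bb(2) by (rule mult_left_mono)
    also have "\<dots> \<le> b q * ((\<delta>N q - ds) / 2)" using bb(1) e0 by (intro mult_right_mono) auto
    also have "\<dots> = h q / 2" using S6[of q] pq pN by simp
    finally show ?thesis using q_def by simp
  qed
  have dich: "b (Suc p) < b p / 2 \<or> h p \<le> h (p - 1) / 2" if "2 \<le> p" "Suc p \<le> N" for p
    using S1[OF that(2)] S8[of p] S9[of p] that by auto
  define BS where "BS = {p. 2 \<le> p \<and> Suc p \<le> N \<and> b (Suc p) < b p / 2}"
  define HS where "HS = {p. 2 \<le> p \<and> Suc p \<le> N \<and> h p \<le> h (p - 1) / 2}"
  have finBS: "finite BS" unfolding BS_def by (rule finite_subset[of _ "{..N}"]) auto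
  have finHS: "finite HS" unfolding HS_def by (rule finite_subset[of _ "{..N}"]) auto
  have cover: "{2..<N} \<subseteq> BS \<union> HS"
  proof
    fix p assume "p \<in> {2..<N}"
    then have "2 \<le> p" "Suc p \<le> N" by auto
    then show "p \<in> BS \<union> HS" using dich[of p] unfolding BS_def HS_def by blast
  qed
  have "N - 2 \<le> card (BS \<union> HS)" using card_mono[OF _ cover] finBS finHS by simp
  also have "\<dots> \<le> card BS + card HS" by (rule card_Un_le)
  finally have Ncard: "N - 2 \<le> card BS + card HS" .
  have m1: "m \<ge> 1"
  proof (rule ccontr)
    assume "\<not> m \<ge> 1"
    then have "m = 0" by simp
    obtain x where "x \<in> D" using Dne by blast
    then show False using dpos \<open>m = 0\<close> unfolding dotp_def by auto
  qed
  have cBS: "real (card BS) \<le> 13 * (real m * ln (real m) + 1)"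
  proof (rule count_bound[OF _ m1])
    show "2 ^ card BS \<le> (card BS + 1) ^ m"
    proof (rule goemans_count[OF finBS, of "\<lambda>p. X (Suc p)" m d])
      show "\<forall>p\<in>BS. X (Suc p) \<in> bin_cube m" using XD Dsub unfolding BS_def by auto
      show "\<forall>p\<in>BS. dotp m d (X (Suc p)) > 0" using bpos unfolding BS_def b_def by auto
      show "\<forall>p\<in>BS. \<forall>q\<in>BS. p < q \<longrightarrow> dotp m d (X (Suc q)) \<le> dotp m d (X (Suc p)) / 2"
      proof (intro ballI impI)
        fix p q assume p: "p \<in> BS" and q: "q \<in> BS" and pq: "p < q"
        have "b q \<le> b (Suc p)" using S5[of "Suc p" q] p q pq unfolding BS_def by auto
        then show "dotp m d (X (Suc q)) \<le> dotp m d (X (Suc p)) / 2"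
          using q unfolding BS_def b_def by auto
      qed
    qed
  qed
  have cHS: "real (card HS) \<le> 13 * (real m * ln (real m) + 1)"
  proof (rule count_bound[OF _ m1])
    show "2 ^ card HS \<le> (card HS + 1) ^ m"
    proof (rule goemans_count[OF finHS, of X m "\<lambda>i. c i - ds * d i"])
      show "\<forall>p\<in>HS. X p \<in> bin_cube m" using XD Dsub unfolding HS_def by auto
      show "\<forall>p\<in>HS. dotp m (\<lambda>i. c i - ds * d i) (X p) > 0"
        using S7 unfolding HS_def h_def dotp_lin by auto
      show "\<forall>p\<in>HS. \<forall>q\<in>HS. p < q \<longrightarrow> dotp m (\<lambda>i. c i - ds * d i) (X q) \<le> dotp m (\<lambda>i. c i - ds * d i) (X p) / 2"
      proof (intro ballI impI)
        fix p q assume p: "p \<in> HS" and q: "q \<in> HS" and pq: "p < q"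
        have "h (q - 1) \<le> h p" using S5[of p "q - 1"] p q pq unfolding HS_def by auto
        then show "dotp m (\<lambda>i. c i - ds * d i) (X q) \<le> dotp m (\<lambda>i. c i - ds * d i) (X p) / 2"
          using q unfolding HS_def h_def dotp_lin by auto
      qed
    qed
  qed
  have "real N \<le> real (card BS) + real (card HS) + 2" using Ncard by linarith
  then show ?thesis using cBS cHS by linarith
qed

end


theorem theorem3p6:
  "\<exists>C::real. \<forall>m c d D \<delta>1 g1 st.
     D \<subseteq> bin_cube m \<and> D \<noteq> {} \<and> (\<forall>x\<in>D. dotp m d x > 0) \<and>
     fval m c d D \<delta>1 \<le> 0 \<and> supergrad (fval m c d D) \<delta>1 g1 \<and> g1 < 0 \<and>
     lanD_run m c d D \<delta>1 g1 st
     \<longrightarrow> (\<exists>k. real (k + 1) \<le> C * (real m * ln (real m) + 1) \<and>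
              (\<forall>j\<le>k. st j \<noteq> None) \<and>
              (\<exists>s. st k = Some s \<and> fval m c d D (fst s) = 0))"
proof (rule exI[of _ 31], intro allI impI, elim conjE)
  fix m c d D \<delta>1 g1 st
  assume Dsub: "D \<subseteq> bin_cube m" and Dne: "D \<noteq> {}" and dpos: "\<forall>x\<in>D. dotp m d x > 0"
    and F1: "fval m c d D \<delta>1 \<le> 0" and sg1: "supergrad (fval m c d D) \<delta>1 g1" and g1: "g1 < 0"
    and run: "lanD_run m c d D \<delta>1 g1 st"
  interpret lfco m c d D using Dsub Dne dpos by unfold_locales
  have m1: "m \<ge> 1"
  proof (rule ccontr)
    assume "\<not> m \<ge> 1"
    then have "m = 0" by simp
    obtain x where "x \<in> D" using Dne by blast
    then show False using dpos \<open>m = 0\<close> unfolding dotp_def by auto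
  qed
  define Y where "Y = real m * ln (real m) + 1"
  have Y1: "Y \<ge> 1" using m1 Y_def by simp
  have claim: "(\<exists>k\<le>n. (\<forall>j\<le>k. st j \<noteq> None) \<and> (\<exists>s. st k = Some s \<and> F (fst s) = 0)) \<or>
      (\<forall>p\<le>n. \<exists>s. st p = Some s \<and> F (fst s) \<noteq> 0)" for n
  proof (induction n)
    case 0
    have "st 0 = Some (\<delta>1, g1)" using run unfolding lanD_run_def by simp
    then show ?case by (cases "F \<delta>1 = 0") auto
  next
    case (Suc n)
    show ?case
    proof (cases "\<exists>k\<le>n. (\<forall>j\<le>k. st j \<noteq> None) \<and> (\<exists>s. st k = Some s \<and> F (fst s) = 0)")
      case True then show ?thesis using le_SucI by blast
    next
      case False
      then have R: "\<forall>p\<le>n. \<exists>s. st p = Some s \<and> F (fst s) \<noteq> 0" using Suc.IH by blast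
      obtain \<delta> g where sp: "st n = Some (\<delta>, g)" "F \<delta> < 0" "g < 0" "supergrad F \<delta> g"
        using run_good[OF run F1 sg1 g1 R, of n] by auto
      obtain \<delta>n gn where sn: "st (Suc n) = Some (\<delta>n, gn)"
        using run_step[OF run sp] by blast
      show ?thesis
      proof (cases "F \<delta>n = 0")
        case True
        have "\<forall>j\<le>Suc n. st j \<noteq> None"
        proof (intro allI impI)
          fix j assume "j \<le> Suc n"
          then consider "j \<le> n" | "j = Suc n" by linarith
          then show "st j \<noteq> None" using R sn by cases auto
        qed
        then show ?thesis using True sn by (intro disjI1 exI[of _ "Suc n"]) auto
      next
        case False
        have "\<forall>p\<le>Suc n. \<exists>s. st p = Some s \<and> F (fst s) \<noteq> 0"
        proof (intro allI impI)
          fix j assume "j \<le> Suc n"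
          then consider "j \<le> n" | "j = Suc n" by linarith
          then show "\<exists>s. st j = Some s \<and> F (fst s) \<noteq> 0" using R sn False by cases auto
        qed
        then show ?thesis by blast
      qed
    qed
  qed
  define n0 where "n0 = nat \<lceil>26 * Y + 3\<rceil>"
  have cz: "\<lceil>26 * Y + 3\<rceil> \<ge> 0" using Y1 by simp
  have eq: "real n0 = of_int \<lceil>26 * Y + 3\<rceil>" unfolding n0_def using cz by simp
  have n0ge: "real n0 \<ge> 26 * Y + 3" unfolding eq by (rule le_of_int_ceiling)
  have n0le: "real n0 \<le> 26 * Y + 4" unfolding eq using of_int_ceiling_le_add_one[of "26 * Y + 3"] by simp
  have "\<not> (\<forall>p\<le>n0. \<exists>s. st p = Some s \<and> F (fst s) \<noteq> 0)"
  proof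
    assume "\<forall>p\<le>n0. \<exists>s. st p = Some s \<and> F (fst s) \<noteq> 0"
    from run_count[OF run F1 sg1 g1 this] have "real n0 \<le> 26 * Y + 2" unfolding Y_def .
    then show False using n0ge by linarith
  qed
  then obtain k where k: "k \<le> n0" "\<forall>j\<le>k. st j \<noteq> None" "\<exists>s. st k = Some s \<and> F (fst s) = 0"
    using claim[of n0] by blast
  have "real (k + 1) \<le> real n0 + 1" using k(1) by simp
  also have "\<dots> \<le> 31 * Y" using n0le Y1 by linarith
  finally show "\<exists>k. real (k + 1) \<le> 31 * (real m * ln (real m) + 1) \<and>
              (\<forall>j\<le>k. st j \<noteq> None) \<and> (\<exists>s. st k = Some s \<and> F (fst s) = 0)"
    using k Y_def by blast
qed


end
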